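(* Let $k\ge1$. (1) An element $g=(g_1,g_2)$ of $B_k$ lies in $G_k'$ if and only if $g_1,g_2\in G_{k-1}$ and $g_1g_2\in B_{k-1}'$. (2) Every element of $G_k'$ is a single commutator: $G_k'=\{[f_1,f_2]\mid f_1,f_2\in G_k\}$.
   Context: Let $C_2=\{e,\sigma\}$ with $\sigma=(1,2)$. Define $B_1=C_2$ and $B_k=B_{k-1}\wr C_2$ for $k>1$, with elements written as wreath recursions $(g_1,g_2)\pi$, $g_1,g_2\in B_{k-1}$, $\pi\in C_2$, and multiplication $(g_1,g_2)\pi\cdot(h_1,h_2)\rho=(g_1h_{\pi(1)},g_2h_{\pi(2)})\pi\rho$; $(g_1,g_2)$ denotes an element with $\pi=e$. Define $G_1=\{e\}$ and, for $k>1$, $G_k=\{(g_1,g_2)\pi\in B_k : g_1g_2\in G_{k-1}\}$ (so $G_k\cong\mathrm{Syl}_2A_{2^k}$). The commutator is $[a,b]=aba^{-1}b^{-1}$. *)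

theory Defs
  imports "HOL-Algebra.Solvable_Groups"
begin

text \<open>Wreath recursion elements. Leaf is the unique element of the trivial group B_0;
  Node g1 g2 p stands for (g1,g2) pi, where p = True means pi = sigma = (1 2)
  and p = False means pi = e.\<close>
datatype wr = Leaf | Node wr wr bool

fun wmult :: "wr \<Rightarrow> wr \<Rightarrow> wr" where
  "wmult Leaf Leaf = Leaf"
| "wmult (Node g1 g2 p) (Node h1 h2 q) =
     Node (wmult g1 (if p then h2 else h1)) (wmult g2 (if p then h1 else h2)) (p \<noteq> q)"
| "wmult _ _ = Leaf"

fun wone :: "nat \<Rightarrow> wr" where
  "wone 0 = Leaf"
| "wone (Suc k) = Node (wone k) (wone k) False"

fun Bset :: "nat \<Rightarrow> wr set" where
  "Bset 0 = {Leaf}"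
| "Bset (Suc k) = {Node g1 g2 p | g1 g2 p. g1 \<in> Bset k \<and> g2 \<in> Bset k}"

definition Bgrp :: "nat \<Rightarrow> wr monoid" where
  "Bgrp k = \<lparr>carrier = Bset k, mult = wmult, one = wone k\<rparr>"

text \<open>G_1 = {e}; G_k = {(g1,g2)pi in B_k : g1 g2 in G_(k-1)} for k > 1.
  G_0 is set to the trivial group B_0 (only used in part (1) for k = 1).\<close>
fun Gset :: "nat \<Rightarrow> wr set" where
  "Gset 0 = {Leaf}"
| "Gset (Suc 0) = {wone 1}"
| "Gset (Suc (Suc k)) = {Node g1 g2 p | g1 g2 p. Node g1 g2 p \<in> Bset (Suc (Suc k))
       \<and> wmult g1 g2 \<in> Gset (Suc k)}"

definition commutator :: "('a, 'b) monoid_scheme \<Rightarrow> 'a \<Rightarrow> 'a \<Rightarrow> 'a" where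
  "commutator G a b = a \<otimes>\<^bsub>G\<^esub> b \<otimes>\<^bsub>G\<^esub> inv\<^bsub>G\<^esub> a \<otimes>\<^bsub>G\<^esub> inv\<^bsub>G\<^esub> b"

end

theory Submission
  imports Defs
begin


lemma Bset_Suc_Node[simp]: "Node g1 g2 p \<in> Bset (Suc k) \<longleftrightarrow> g1 \<in> Bset k \<and> g2 \<in> Bset k"
  by auto
lemma Bset_Suc_Leaf[simp]: "Leaf \<notin> Bset (Suc k)"
  by auto
lemma Bset_0[simp]: "x \<in> Bset 0 \<longleftrightarrow> x = Leaf"
  by auto
lemma Bset_SucE:
  assumes "x \<in> Bset (Suc k)"
  obtains g1 g2 p where "x = Node g1 g2 p" "g1 \<in> Bset k" "g2 \<in> Bset k"
  using assms by auto

declare Bset.simps(2)[simp del]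

fun winv :: "wr \<Rightarrow> wr" where
  "winv Leaf = Leaf"
| "winv (Node g1 g2 p) = (if p then Node (winv g2) (winv g1) True else Node (winv g1) (winv g2) False)"

lemma wmult_closed: "a \<in> Bset k \<Longrightarrow> b \<in> Bset k \<Longrightarrow> wmult a b \<in> Bset k"
  by (induction k arbitrary: a b) (auto elim!: Bset_SucE)

lemma wone_closed[simp]: "wone k \<in> Bset k"
  by (induction k) auto

lemma winv_closed: "a \<in> Bset k \<Longrightarrow> winv a \<in> Bset k"
  by (induction k arbitrary: a) (auto elim!: Bset_SucE)

lemma wmult_assoc: "a \<in> Bset k \<Longrightarrow> b \<in> Bset k \<Longrightarrow> c \<in> Bset k \<Longrightarrow>
   wmult (wmult a b) c = wmult a (wmult b c)"
  by (induction k arbitrary: a b c) (auto elim!: Bset_SucE)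

lemma wone_l: "a \<in> Bset k \<Longrightarrow> wmult (wone k) a = a"
  by (induction k arbitrary: a) (auto elim!: Bset_SucE)

lemma winv_l: "a \<in> Bset k \<Longrightarrow> wmult (winv a) a = wone k"
  by (induction k arbitrary: a) (auto elim!: Bset_SucE)

lemma group_B: "group (Bgrp k)"
  apply (rule groupI)
  unfolding Bgrp_def
  by (auto intro: wmult_closed wmult_assoc wone_l winv_closed winv_l)

lemma carrier_B[simp]: "carrier (Bgrp k) = Bset k" and mult_B[simp]: "mult (Bgrp k) = wmult"
  and one_B[simp]: "one (Bgrp k) = wone k"
  by (simp_all add: Bgrp_def)

lemma inv_B[simp]: "a \<in> Bset k \<Longrightarrow> inv\<^bsub>Bgrp k\<^esub> a = winv a"
proof -
  interpret B: group "Bgrp k" by (rule group_B)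
  assume "a \<in> Bset k"
  then show ?thesis using B.inv_equality[of "winv a" a] winv_l winv_closed by simp
qed



fun par :: "wr \<Rightarrow> nat \<Rightarrow> bool" where
  "par Leaf i = False"
| "par (Node g1 g2 p) i = (case i of 0 \<Rightarrow> p | Suc j \<Rightarrow> par g1 j \<noteq> par g2 j)"

lemma par_mult: "a \<in> Bset k \<Longrightarrow> b \<in> Bset k \<Longrightarrow> par (wmult a b) i = (par a i \<noteq> par b i)"
proof (induction k arbitrary: a b i)
  case 0 then show ?case by simp
next
  case (Suc k)
  obtain a1 a2 p where ha: "a = Node a1 a2 p" "a1 \<in> Bset k" "a2 \<in> Bset k" using Suc.prems by (auto elim!: Bset_SucE)
  obtain b1 b2 q where hb: "b = Node b1 b2 q" "b1 \<in> Bset k" "b2 \<in> Bset k" using Suc.prems by (auto elim!: Bset_SucE)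
  show ?case
  proof (cases i)
    case 0 then show ?thesis using ha hb by simp
  next
    case (Suc j)
    then show ?thesis using ha hb Suc.IH[of a1 b1 j] Suc.IH[of a1 b2 j] Suc.IH[of a2 b1 j] Suc.IH[of a2 b2 j]
      by (cases p) auto
  qed
qed

lemma par_inv[simp]: "par (winv a) i = par a i"
  by (induction a arbitrary: i) (auto split: nat.splits)

lemma par_wone[simp]: "par (wone k) i = False"
  by (induction k arbitrary: i) (auto split: nat.splits)

lemma par_high: "a \<in> Bset k \<Longrightarrow> k \<le> i \<Longrightarrow> \<not> par a i"
  by (induction k arbitrary: a i) (auto elim!: Bset_SucE split: nat.splits)

lemma Gset_char: "Gset k = {g \<in> Bset k. \<not> par g (k - 1)}"
proof (induction k rule: Gset.induct)
  case 1 then show ?case by auto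
next
  case 2 then show ?case by (auto elim!: Bset_SucE simp: numeral_eq_Suc)
next
  case (3 k)
  have h: "wmult g1 g2 \<in> Gset (Suc k) \<longleftrightarrow> \<not> par (Node g1 g2 p) (Suc k)"
    if "g1 \<in> Bset (Suc k)" "g2 \<in> Bset (Suc k)" for g1 g2 p
    using that 3 wmult_closed[OF that] par_mult[OF that, of k] by simp
  show ?case
  proof (rule Set.set_eqI)
    fix x
    show "x \<in> Gset (Suc (Suc k)) \<longleftrightarrow> x \<in> {g \<in> Bset (Suc (Suc k)). \<not> par g (Suc (Suc k) - 1)}"
    proof
      assume "x \<in> Gset (Suc (Suc k))"
      then obtain g1 g2 p where "x = Node g1 g2 p" "g1 \<in> Bset (Suc k)" "g2 \<in> Bset (Suc k)"
        "wmult g1 g2 \<in> Gset (Suc k)" by auto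
      then show "x \<in> {g \<in> Bset (Suc (Suc k)). \<not> par g (Suc (Suc k) - 1)}" using h by simp
    next
      assume "x \<in> {g \<in> Bset (Suc (Suc k)). \<not> par g (Suc (Suc k) - 1)}"
      then obtain g1 g2 p where "x = Node g1 g2 p" "g1 \<in> Bset (Suc k)" "g2 \<in> Bset (Suc k)"
        "\<not> par x (Suc k)" by (auto elim!: Bset_SucE)
      then show "x \<in> Gset (Suc (Suc k))" using h by simp
    qed
  qed
qed

definition Kset :: "nat \<Rightarrow> wr set" where
  "Kset k = {g \<in> Bset k. \<forall>i. \<not> par g i}"

definition lp :: "nat \<Rightarrow> wr \<Rightarrow> bool" where
  "lp k g = (case g of Leaf \<Rightarrow> False | Node g1 g2 p \<Rightarrow> par g1 (k - 2))"

definition Sset :: "nat \<Rightarrow> wr set" where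
  "Sset k = {g \<in> Kset k. \<not> lp k g}"

lemma lp_mult: "k \<ge> 1 \<Longrightarrow> a \<in> Bset k \<Longrightarrow> b \<in> Bset k \<Longrightarrow> \<not> par b (k - 1) \<Longrightarrow>
  lp k (wmult a b) = (lp k a \<noteq> lp k b)"
proof -
  assume k: "k \<ge> 1" and a: "a \<in> Bset k" and b: "b \<in> Bset k" and nb: "\<not> par b (k - 1)"
  obtain n where n: "k = Suc n" using k by (cases k) auto
  obtain a1 a2 p where ha: "a = Node a1 a2 p" "a1 \<in> Bset n" "a2 \<in> Bset n" using a n by (auto elim!: Bset_SucE)
  obtain b1 b2 q where hb: "b = Node b1 b2 q" "b1 \<in> Bset n" "b2 \<in> Bset n" using b n by (auto elim!: Bset_SucE)
  have eq: "par b1 (k - 2) = par b2 (k - 2)"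
  proof (cases n)
    case 0 then show ?thesis using hb by simp
  next
    case (Suc m) then show ?thesis using nb hb n by simp
  qed
  show ?thesis using ha hb eq by (simp add: lp_def par_mult)
qed

lemma lp_inv: "k \<ge> 1 \<Longrightarrow> a \<in> Bset k \<Longrightarrow> \<not> par a (k - 1) \<Longrightarrow> lp k (winv a) = lp k a"
proof -
  assume k: "k \<ge> 1" and a: "a \<in> Bset k" and na: "\<not> par a (k - 1)"
  obtain n where n: "k = Suc n" using k by (cases k) auto
  obtain a1 a2 p where ha: "a = Node a1 a2 p" "a1 \<in> Bset n" "a2 \<in> Bset n" using a n by (auto elim!: Bset_SucE)
  have eq: "par a1 (k - 2) = par a2 (k - 2)"
  proof (cases n)
    case 0 then show ?thesis using ha by simp
  next
    case (Suc m) then show ?thesis using na ha n by simp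
  qed
  show ?thesis using ha eq by (simp add: lp_def)
qed

lemma comm_B: "a \<in> Bset k \<Longrightarrow> b \<in> Bset k \<Longrightarrow>
   commutator (Bgrp k) a b = wmult (wmult (wmult a b) (winv a)) (winv b)"
  by (simp add: commutator_def)

lemma comm_in_K: "a \<in> Bset k \<Longrightarrow> b \<in> Bset k \<Longrightarrow> commutator (Bgrp k) a b \<in> Kset k"
proof -
  assume a: "a \<in> Bset k" and b: "b \<in> Bset k"
  have 1: "wmult a b \<in> Bset k" using a b by (simp add: wmult_closed)
  have 2: "wmult (wmult a b) (winv a) \<in> Bset k" using 1 a by (simp add: wmult_closed winv_closed)
  have 3: "wmult (wmult (wmult a b) (winv a)) (winv b) \<in> Bset k" using 2 b by (simp add: wmult_closed winv_closed)
  show ?thesis using a b 1 2 3 by (auto simp add: comm_B Kset_def par_mult winv_closed)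
qed

lemma comm_in_S: "k \<ge> 1 \<Longrightarrow> a \<in> Gset k \<Longrightarrow> b \<in> Gset k \<Longrightarrow> commutator (Bgrp k) a b \<in> Sset k"
proof -
  assume k: "k \<ge> 1" and "a \<in> Gset k" "b \<in> Gset k"
  then have a: "a \<in> Bset k" "\<not> par a (k-1)" and b: "b \<in> Bset k" "\<not> par b (k-1)" by (auto simp: Gset_char)
  have 1: "wmult a b \<in> Bset k" using a b by (simp add: wmult_closed)
  have 2: "wmult (wmult a b) (winv a) \<in> Bset k" using 1 a by (simp add: wmult_closed winv_closed)
  have l1: "lp k (wmult a b) = (lp k a \<noteq> lp k b)" using lp_mult k a b by simp
  have l2: "lp k (wmult (wmult a b) (winv a)) = lp k b" using lp_mult[OF k 1 winv_closed[OF a(1)]] a l1 lp_inv[OF k a]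
    by auto
  have l3: "lp k (wmult (wmult (wmult a b) (winv a)) (winv b)) = False"
    using lp_mult[OF k 2 winv_closed[OF b(1)]] b l2 lp_inv[OF k b] by simp
  show ?thesis using comm_in_K[OF a(1) b(1)] l3 a b by (simp add: Sset_def comm_B)
qed



lemma B_facts:
  assumes "a \<in> Bset k" "b \<in> Bset k"
  shows wone_r: "wmult a (wone k) = a" and winv_r: "wmult a (winv a) = wone k"
    and winv_winv: "winv (winv a) = a"
    and winv_wmult: "winv (wmult a b) = wmult (winv b) (winv a)"
    and winv_wone: "winv (wone k) = wone k"
proof -
  interpret B: group "Bgrp k" by (rule group_B)
  show "wmult a (wone k) = a" using B.r_one[of a] assms by simp
  show "wmult a (winv a) = wone k" using B.r_inv[of a] assms by simp
  show "winv (winv a) = a" using B.inv_inv[of a] assms winv_closed by simp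
  show "winv (wmult a b) = wmult (winv b) (winv a)" using B.inv_mult_group[of a b] assms
    wmult_closed winv_closed by simp
  show "winv (wone k) = wone k" using B.inv_one by simp
qed

lemma comm_construct:
  assumes h1: "h1 \<in> Bset n" and h2: "h2 \<in> Bset n" and X: "X \<in> Bset n" and Y: "Y \<in> Bset n"
    and eq: "wmult h1 h2 = commutator (Bgrp n) X Y"
  shows "commutator (Bgrp (Suc n)) (Node X (wmult (winv h1) X) False) (Node (wone n) Y True) = Node h1 h2 False"
proof -
  define a2 where "a2 = wmult (winv h1) X"
  have a2: "a2 \<in> Bset n" using h1 X by (simp add: a2_def wmult_closed winv_closed)
  have c1: "wmult (wmult (wmult X (wone n)) (winv a2)) (winv (wone n)) = h1"
  proof -
    have "winv a2 = wmult (winv X) h1"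
      using winv_wmult[OF winv_closed[OF h1] X] winv_winv[OF h1 h1] by (simp add: a2_def)
    then have "wmult (wmult (wmult X (wone n)) (winv a2)) (winv (wone n)) = wmult X (wmult (winv X) h1)"
      using h1 X a2 by (simp add: wone_r winv_wone winv_closed wmult_closed)
    also have "\<dots> = h1" using wmult_assoc[OF X winv_closed[OF X] h1] winv_r[OF X X] wone_l[OF h1]
      by simp
    finally show ?thesis .
  qed
  have c2: "wmult (wmult (wmult a2 Y) (winv X)) (winv Y) = h2"
  proof -
    have "wmult (wmult (wmult a2 Y) (winv X)) (winv Y) = wmult (winv h1) (wmult (wmult (wmult X Y) (winv X)) (winv Y))"
      using h1 X Y by (simp add: a2_def wmult_assoc[where k=n] winv_closed[where k=n] wmult_closed[where k=n])
    also have "\<dots> = wmult (winv h1) (wmult h1 h2)" using eq X Y by (simp add: commutator_def)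
    also have "\<dots> = h2" using h1 h2 wmult_assoc[OF winv_closed[OF h1] h1 h2] winv_l[OF h1] wone_l[OF h2] by simp
    finally show ?thesis .
  qed
  have xin: "Node X a2 False \<in> Bset (Suc n)" using X a2 by simp
  have yin: "Node (wone n) Y True \<in> Bset (Suc n)" using Y by simp
  show ?thesis
    unfolding a2_def[symmetric] comm_B[OF xin yin]
    using c1 c2 by simp
qed



lemma par_Node_0[simp]: "par (Node g1 g2 p) 0 = p" by simp
lemma par_Node_Suc[simp]: "par (Node g1 g2 p) (Suc j) = (par g1 j \<noteq> par g2 j)" by simp
declare par.simps(2)[simp del]
lemma par_Node_same[simp]: "par (Node g g False) i = False" by (cases i) auto

lemma par_Node_all: "(\<forall>i. \<not> par (Node g1 g2 p) i) \<longleftrightarrow> \<not>p \<and> (\<forall>j. par g1 j = par g2 j)"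
proof
  assume h: "\<forall>i. \<not> par (Node g1 g2 p) i"
  show "\<not>p \<and> (\<forall>j. par g1 j = par g2 j)"
  proof
    show "\<not> p" using h[rule_format, of 0] by simp
    show "\<forall>j. par g1 j = par g2 j" proof
    fix j show "par g1 j = par g2 j" using h[rule_format, of "Suc j"] by simp
  qed
  qed
next
  assume "\<not>p \<and> (\<forall>j. par g1 j = par g2 j)"
  then show "\<forall>i. \<not> par (Node g1 g2 p) i" by (auto simp: par.simps split: nat.splits)
qed

lemma Gset_sub: "Gset k \<subseteq> Bset k" by (auto simp: Gset_char)

lemma K1: "h \<in> Kset (Suc 0) \<Longrightarrow> h = Node Leaf Leaf False"
proof -
  assume h: "h \<in> Kset (Suc 0)"
  then obtain g1 g2 p where "h = Node g1 g2 p" "g1 = Leaf" "g2 = Leaf" by (auto simp: Kset_def elim!: Bset_SucE)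
  moreover have "\<not> par h 0" using h by (simp add: Kset_def)
  ultimately show ?thesis by simp
qed

lemma comm_one1: "commutator (Bgrp (Suc 0)) (Node Leaf Leaf False) (Node Leaf Leaf False) = Node Leaf Leaf False"
  by (simp add: comm_B)

lemma G1: "Node Leaf Leaf False \<in> Gset (Suc 0)" by (simp add: One_nat_def)

lemma commK: "h \<in> Kset (Suc n) \<Longrightarrow> \<exists>X\<in>Bset (Suc n). \<exists>Y\<in>Gset (Suc n). h = commutator (Bgrp (Suc n)) X Y"
proof (induction n arbitrary: h)
  case 0
  then show ?case using K1 comm_one1 G1 by (metis Gset_sub subsetD)
next
  case (Suc n)
  obtain h1 h2 p where hh: "h = Node h1 h2 p" "h1 \<in> Bset (Suc n)" "h2 \<in> Bset (Suc n)"
    using Suc.prems by (auto simp: Kset_def elim!: Bset_SucE)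
  have np: "\<not> p" and eqp: "\<forall>j. par h1 j = par h2 j" using Suc.prems hh by (auto simp: Kset_def par_Node_all)
  have "wmult h1 h2 \<in> Kset (Suc n)" using hh eqp by (simp add: Kset_def wmult_closed par_mult)
  then obtain X Y where X: "X \<in> Bset (Suc n)" and Y: "Y \<in> Gset (Suc n)"
    and e: "wmult h1 h2 = commutator (Bgrp (Suc n)) X Y" using Suc.IH by blast
  have YB: "Y \<in> Bset (Suc n)" using Y Gset_sub by blast
  have c: "commutator (Bgrp (Suc (Suc n))) (Node X (wmult (winv h1) X) False) (Node (wone (Suc n)) Y True) = h"
    using comm_construct[OF hh(2,3) X YB e] hh np by simp
  have xin: "Node X (wmult (winv h1) X) False \<in> Bset (Suc (Suc n))"
    using X hh by (simp add: wmult_closed winv_closed)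
  have yin: "Node (wone (Suc n)) Y True \<in> Gset (Suc (Suc n))"
    using Y YB by (simp add: Gset_char)
  show ?case using c xin yin Gset_sub by blast
qed

lemma S1: "g \<in> Sset (Suc 0) \<Longrightarrow> g = Node Leaf Leaf False"
  by (auto simp: Sset_def Kset_def par_Node_all elim!: Bset_SucE)

lemma commS: "g \<in> Sset (Suc n) \<Longrightarrow> \<exists>a\<in>Gset (Suc n). \<exists>b\<in>Gset (Suc n). g = commutator (Bgrp (Suc n)) a b"
proof (cases n)
  case 0
  assume "g \<in> Sset (Suc n)"
  then show ?thesis using 0 S1 comm_one1 G1 by metis
next
  case (Suc m)
  assume g: "g \<in> Sset (Suc n)"
  obtain g1 g2 p where hh: "g = Node g1 g2 p" "g1 \<in> Bset n" "g2 \<in> Bset n"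
    using g by (auto simp: Sset_def Kset_def elim!: Bset_SucE)
  have np: "\<not> p" and eqp: "\<forall>j. par g1 j = par g2 j" and lg: "\<not> par g1 m"
    using g hh Suc by (auto simp: Sset_def Kset_def par_Node_all lp_def)
  have "wmult g1 g2 \<in> Kset (Suc m)" using hh eqp Suc by (simp add: Kset_def wmult_closed par_mult)
  then obtain X Y where X: "X \<in> Bset (Suc m)" and Y: "Y \<in> Gset (Suc m)"
    and e: "wmult g1 g2 = commutator (Bgrp (Suc m)) X Y" using commK by blast
  have YB: "Y \<in> Bset (Suc m)" using Y Gset_sub by blast
  have c: "commutator (Bgrp (Suc (Suc m))) (Node X (wmult (winv g1) X) False) (Node (wone (Suc m)) Y True) = g"
    using comm_construct[of g1 "Suc m" g2 X Y] hh X YB e np Suc by simp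
  have xin: "Node X (wmult (winv g1) X) False \<in> Gset (Suc (Suc m))"
    using X hh Suc lg par_mult[of "winv g1" "Suc m" X m] winv_closed[of g1 "Suc m"] by (simp add: Gset_char wmult_closed winv_closed)
  have yin: "Node (wone (Suc m)) Y True \<in> Gset (Suc (Suc m))"
    using Y YB by (simp add: Gset_char)
  show ?thesis using c xin yin Suc by blast
qed



lemma derived_eqI:
  assumes "group G" "subgroup H G" "derived_set G X \<subseteq> H" "H \<subseteq> derived_set G X"
  shows "derived G X = H"
proof -
  interpret group G by fact
  have "derived G X \<subseteq> H" unfolding derived_def by (rule generate_subgroup_incl[OF assms(3,2)])
  moreover have "H \<subseteq> derived G X" unfolding derived_def
  proof
    fix h assume "h \<in> H"
    with assms(4) have "h \<in> derived_set G X" by (rule subsetD)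
    then show "h \<in> generate G (derived_set G X)" by (rule generate.incl)
  qed
  ultimately show ?thesis by blast
qed

lemma dset_eq: "derived_set G X = {commutator G a b | a b. a \<in> X \<and> b \<in> X}"
  unfolding commutator_def by blast

lemma sub_K: "subgroup (Kset k) (Bgrp k)"
proof (rule subgroup.intro)
  show "Kset k \<subseteq> carrier (Bgrp k)" by (auto simp: Kset_def)
  fix x y assume x: "x \<in> Kset k" and y: "y \<in> Kset k"
  then show "x \<otimes>\<^bsub>Bgrp k\<^esub> y \<in> Kset k"
    by (auto simp: Kset_def wmult_closed par_mult)
  show "inv\<^bsub>Bgrp k\<^esub> x \<in> Kset k" using x by (auto simp: Kset_def winv_closed)
next
  show "\<one>\<^bsub>Bgrp k\<^esub> \<in> Kset k" by (simp add: Kset_def)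
qed

lemma lp_wone: "lp k (wone k) = False"
  by (cases k) (auto simp: lp_def)

lemma sub_S: "k \<ge> 1 \<Longrightarrow> subgroup (Sset k) (Bgrp k)"
proof (rule subgroup.intro)
  assume k: "k \<ge> 1"
  show "Sset k \<subseteq> carrier (Bgrp k)" by (auto simp: Sset_def Kset_def)
  fix x y assume x: "x \<in> Sset k" and y: "y \<in> Sset k"
  then show "x \<otimes>\<^bsub>Bgrp k\<^esub> y \<in> Sset k"
    using sub_K[of k] lp_mult[OF k, of x y] unfolding Sset_def
    by (auto simp: Kset_def dest: subgroup.m_closed)
  show "inv\<^bsub>Bgrp k\<^esub> x \<in> Sset k" using x lp_inv[OF k, of x]
    using sub_K[of k] by (auto simp: Sset_def Kset_def winv_closed)
next
  show "\<one>\<^bsub>Bgrp k\<^esub> \<in> Sset k" by (simp add: Sset_def Kset_def lp_wone)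
qed

lemma derived_K: "derived (Bgrp m) (Bset m) = Kset m"
proof (rule derived_eqI[OF group_B sub_K])
  show "derived_set (Bgrp m) (Bset m) \<subseteq> Kset m"
    unfolding dset_eq using comm_in_K by blast
  show "Kset m \<subseteq> derived_set (Bgrp m) (Bset m)"
  proof (cases m)
    case 0
    have "commutator (Bgrp 0) Leaf Leaf = Leaf" by (simp add: comm_B)
    then show ?thesis unfolding dset_eq using 0 by (force simp: Kset_def)
  next
    case (Suc n)
    show ?thesis unfolding dset_eq using commK Suc Gset_sub by blast
  qed
qed

lemma Sset_eq: "k \<ge> 1 \<Longrightarrow> Sset k = {commutator (Bgrp k) f1 f2 | f1 f2. f1 \<in> Gset k \<and> f2 \<in> Gset k}"
proof -
  assume k: "k \<ge> 1"
  then obtain n where n: "k = Suc n" by (cases k) auto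
  show ?thesis using commS[of _ n] comm_in_S[OF k] n by blast
qed

lemma derived_G: "k \<ge> 1 \<Longrightarrow> derived (Bgrp k) (Gset k) = Sset k"
  by (rule derived_eqI[OF group_B sub_S]) (unfold dset_eq, simp_all add: Sset_eq)

theorem mainTheorem16:
  fixes k :: nat
  assumes "k \<ge> 1"
  shows "(\<forall>g1 g2. Node g1 g2 False \<in> Bset k \<longrightarrow>
            (Node g1 g2 False \<in> derived (Bgrp k) (Gset k) \<longleftrightarrow>
              g1 \<in> Gset (k - 1) \<and> g2 \<in> Gset (k - 1) \<and>
              wmult g1 g2 \<in> derived (Bgrp (k - 1)) (Bset (k - 1))))
       \<and> derived (Bgrp k) (Gset k) =
           {commutator (Bgrp k) f1 f2 | f1 f2. f1 \<in> Gset k \<and> f2 \<in> Gset k}"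
proof
  obtain n where n: "k = Suc n" using assms by (cases k) auto
  show "\<forall>g1 g2. Node g1 g2 False \<in> Bset k \<longrightarrow>
            (Node g1 g2 False \<in> derived (Bgrp k) (Gset k) \<longleftrightarrow>
              g1 \<in> Gset (k - 1) \<and> g2 \<in> Gset (k - 1) \<and>
              wmult g1 g2 \<in> derived (Bgrp (k - 1)) (Bset (k - 1)))"
  proof (intro allI impI)
    fix g1 g2 assume "Node g1 g2 False \<in> Bset k"
    then have g: "g1 \<in> Bset n" "g2 \<in> Bset n" using n by auto
    have "Node g1 g2 False \<in> derived (Bgrp k) (Gset k) \<longleftrightarrow>
      (\<forall>j. par g1 j = par g2 j) \<and> \<not> par g1 (n - 1)"
      using derived_G[OF assms] g n by (auto simp: Sset_def Kset_def par_Node_all lp_def)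
    also have "\<dots> \<longleftrightarrow> g1 \<in> Gset (k - 1) \<and> g2 \<in> Gset (k - 1) \<and>
              wmult g1 g2 \<in> derived (Bgrp (k - 1)) (Bset (k - 1))"
      using g n by (auto simp: derived_K Gset_char Kset_def par_mult wmult_closed)
    finally show "Node g1 g2 False \<in> derived (Bgrp k) (Gset k) \<longleftrightarrow>
              g1 \<in> Gset (k - 1) \<and> g2 \<in> Gset (k - 1) \<and>
              wmult g1 g2 \<in> derived (Bgrp (k - 1)) (Bset (k - 1))" .
  qed
  show "derived (Bgrp k) (Gset k) =
           {commutator (Bgrp k) f1 f2 | f1 f2. f1 \<in> Gset k \<and> f2 \<in> Gset k}"
    using derived_G[OF assms] Sset_eq[OF assms] by simp
qed

end
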